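(* Let $X\subseteq\mathbb{N}$ be finite, $\omega^{n+1}$-large and exp-sparse, and let $c\in\mathbb{N}$ with $4^c\le\min X$. Then: (1) for any finite $W\subseteq\mathbb{N}$ with $|W|\le c$ and $\max W<\min X$, and any colouring $P:[W\cup X]^2\to2$, there exists an $\omega^n$-large $Y\subseteq X$ such that $P(w,y)=P(w,y')$ for all $w\in W$ and $y,y'\in Y$; (2) for any finite $W\subseteq\mathbb{N}$ with $|W|\le c$ and $\max X<\min W$, and any colouring $P:[X\cup W]^2\to2$, there exists an $\omega^n$-large $Y\subseteq X$ such that $P(y,w)=P(y',w)$ for all $w\in W$ and $y,y'\in Y$.
   Context: Ordinals below $\omega^\omega$ are in Cantor normal form; $\omega^j\cdot m$ = sum of $m$ copies of $\omega^j$. For $m\in\mathbb{N}$: $0[m]=0$, $(\beta+1)[m]=\beta$, $(\beta+\omega^{n})[m]=\beta+\omega^{n-1}\cdot m$ for $n\ge1$. A finite $X=\{x_0<\dots<x_{\ell-1}\}\subseteq\mathbb{N}$ is $\alpha$-large if $\alpha[x_0]\cdots[x_{\ell-1}]=0$. A set $X$ with $\min X\ge3$ is exp-sparse if $x<y$ in $X$ implies $4^x<y$. Pairs in $[Z]^2$ are written $(x,y)$ with $x<y$. *)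

theory Defs
  imports Main
begin

text \<open>Ordinals below omega^omega in Cantor normal form, represented by the
  list of exponents [e1, ..., ek] (nonincreasing), standing for
  omega^e1 + ... + omega^ek.  The empty list is 0.\<close>

type_synonym cnf = "nat list"

definition cnf_ok :: "cnf \<Rightarrow> bool" where
  "cnf_ok a \<longleftrightarrow> sorted (rev a)"

definition omega_pow :: "nat \<Rightarrow> cnf" where
  "omega_pow n = [n]"

text \<open>Fundamental sequence: 0[m] = 0, (b+1)[m] = b,
  (b + omega^n)[m] = b + omega^(n-1) * m for n >= 1.\<close>
definition fs :: "cnf \<Rightarrow> nat \<Rightarrow> cnf" where
  "fs a m = (if a = [] then []
             else if last a = 0 then butlast a
             else butlast a @ replicate m (last a - 1))"

definition large :: "cnf \<Rightarrow> nat set \<Rightarrow> bool" where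
  "large a X \<longleftrightarrow> finite X \<and> foldl fs a (sorted_list_of_set X) = []"

definition exp_sparse :: "nat set \<Rightarrow> bool" where
  "exp_sparse X \<longleftrightarrow> (\<forall>x\<in>X. 3 \<le> x) \<and> (\<forall>x\<in>X. \<forall>y\<in>X. x < y \<longrightarrow> 4 ^ x < y)"

end

theory Submission
  imports Defs "HOL-Library.Multiset_Order"
begin

definition mmin :: "nat multiset \<Rightarrow> nat" where "mmin M = Min (set_mset M)"

definition fsm :: "nat multiset \<Rightarrow> nat \<Rightarrow> nat multiset" where
  "fsm M y = (if M = {#} then {#} else M - {#mmin M#} +
      (if mmin M = 0 then {#} else replicate_mset y (mmin M - 1)))"

definition LM :: "nat multiset \<Rightarrow> nat list \<Rightarrow> bool" where
  "LM M xs \<longleftrightarrow> foldl fsm M xs = {#}"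

lemma pred_eq_self[simp]: "((m::nat) - Suc 0 = m) = (m = 0)" "(m = (m::nat) - Suc 0) = (m = 0)" by arith+

lemma fsm_empty[simp]: "fsm {#} y = {#}" by (simp add: fsm_def)

lemma LM_Nil[simp]: "LM M [] \<longleftrightarrow> M = {#}" by (simp add: LM_def)
lemma LM_Cons[simp]: "LM M (y#ys) \<longleftrightarrow> LM (fsm M y) ys" by (simp add: LM_def)
lemma LM_empty[simp]: "LM {#} xs" by (induction xs) auto

lemma mmin_in: "M \<noteq> {#} \<Longrightarrow> mmin M \<in># M"
  unfolding mmin_def by (simp add: Min_in)
lemma mmin_le: "z \<in># M \<Longrightarrow> mmin M \<le> z"
  unfolding mmin_def by simp

lemma count_fsm: assumes "M \<noteq> {#}"
  shows "count (fsm M y) z = count M z - (if z = mmin M then 1 else 0)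
     + (if 0 < mmin M \<and> z = mmin M - 1 then y else 0)"
  using assms by (auto simp: fsm_def)

lemma less_by_top:
  fixes A B :: "nat multiset"
  assumes "count A w < count B w" "\<And>z. count A z \<noteq> count B z \<Longrightarrow> z \<le> w"
  shows "A < B"
  unfolding less_multiset\<^sub>H\<^sub>O
proof (intro conjI allI impI)
  show "A \<noteq> B" using assms(1) by auto
next
  fix y assume "count B y < count A y"
  hence "y \<le> w" "y \<noteq> w" using assms by force+
  thus "\<exists>x>y. count A x < count B x" using assms(1) by (intro exI[of _ w]) auto
qed

lemma fsm_add_low:
  assumes "D \<noteq> {#}" "\<forall>d\<in>#D. \<forall>k\<in>#K. d \<le> k"
  shows "fsm (K + D) y = K + fsm D y"
proof -
  have m: "mmin (K + D) = mmin D"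
    unfolding mmin_def[of "K+D"]
  proof (rule Min_eqI)
    show "finite (set_mset (K + D))" by simp
    show "mmin D \<in> set_mset (K+D)" using mmin_in[OF assms(1)] by simp
    fix z assume "z \<in> set_mset (K+D)"
    then show "mmin D \<le> z" using assms mmin_le[of _ D] mmin_in[OF assms(1)] by fastforce
  qed
  have c: "count D (mmin D) > 0" using mmin_in[OF assms(1)] by simp
  show ?thesis
  proof (rule multiset_eqI)
    fix z show "count (fsm (K + D) y) z = count (K + fsm D y) z"
      using assms c by (cases "z = mmin D"; cases "0 < mmin D \<and> z = mmin D - 1"; simp add: count_fsm m)
  qed
qed

lemma TD:
  assumes CK: "\<And>s xs. LM K xs \<Longrightarrow> sorted_wrt (<) xs \<Longrightarrow> (\<forall>x\<in>set xs. s < x) \<Longrightarrow> LM (fsm K s) xs"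
  shows "LM (K + D) xs \<Longrightarrow> sorted_wrt (<) xs \<Longrightarrow> (\<forall>d\<in>#D. \<forall>k\<in>#K. d \<le> k) \<Longrightarrow> LM K xs"
proof (induction xs arbitrary: D)
  case Nil thus ?case by simp
next
  case (Cons y ys)
  show ?case
  proof (cases "D = {#}")
    case True thus ?thesis using Cons by simp
  next
    case False
    have "LM (K + fsm D y) ys" using Cons.prems fsm_add_low[OF False Cons.prems(3)] by simp
    moreover have "\<forall>d\<in>#fsm D y. \<forall>k\<in>#K. d \<le> k"
    proof (intro ballI)
      fix d k assume d: "d \<in># fsm D y" and k: "k \<in># K"
      have "count (fsm D y) d > 0" using d by simp
      hence "d \<in># D \<or> d = mmin D - 1" using False mmin_in[OF False] by (auto simp: count_fsm split: if_splits)
      thus "d \<le> k" using Cons.prems(3) k mmin_in[OF False] by fastforce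
    qed
    ultimately have "LM K ys" using Cons.IH Cons.prems(2) by simp
    thus ?thesis using CK[of ys y] Cons.prems(2) by (cases "K = {#}") auto
  qed
qed

lemma Claim:
  "LM M xs \<Longrightarrow> sorted_wrt (<) xs \<Longrightarrow> (\<forall>x\<in>set xs. s < x) \<Longrightarrow> LM (fsm M s) xs"
proof (induction M arbitrary: s xs rule: less_induct)
  case (less M)
  show ?case
  proof (cases xs)
    case Nil thus ?thesis using less.prems by simp
  next
    case (Cons x xs')
    show ?thesis
    proof (cases "M = {#}")
      case True thus ?thesis by simp
    next
      case Mne: False
      define e where "e = mmin M"
      define M0 where "M0 = M - {#e#}"
      have eM: "e \<in># M" using Mne mmin_in e_def by simp
      have MM0: "M = M0 + {#e#}" using eM M0_def by simp
      have M0less: "M0 < M" using MM0 by (simp add: le_multiset_right_total)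
      have M0ge: "\<forall>k\<in>#M0. e \<le> k" using M0_def e_def mmin_le by (meson in_diffD)
      have sx: "s < x" and srt: "sorted_wrt (<) xs'" and gx: "\<forall>z\<in>set xs'. x < z"
        using less.prems Cons by auto
      have L1: "LM (fsm M x) xs'" using less.prems Cons by simp
      show ?thesis
      proof (cases "e = 0")
        case True
        have f: "fsm M t = M0" for t using Mne True by (simp add: fsm_def e_def[symmetric] M0_def)
        have "LM M0 xs'" using L1 f by simp
        hence "LM (fsm M0 x) xs'" using less.IH[OF M0less] srt gx by blast
        thus ?thesis using Cons f by simp
      next
        case enz: False
        show ?thesis
        proof (cases "s = 0")
          case True
          have f: "fsm M 0 = M0" using Mne by (simp add: fsm_def e_def[symmetric] M0_def)
          have "LM M0 (x#xs')"
          proof (rule TD[where K=M0 and xs="x#xs'" and D="{#e#}"])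
            show "\<And>s xs. LM M0 xs \<Longrightarrow> sorted_wrt (<) xs \<Longrightarrow> (\<forall>x\<in>set xs. s<x) \<Longrightarrow> LM (fsm M0 s) xs"
              using less.IH[OF M0less] by blast
            show "LM (M0 + {#e#}) (x#xs')" using less.prems(1) Cons MM0 by simp
            show "sorted_wrt (<) (x#xs')" using less.prems(2) Cons by simp
            show "\<forall>d\<in>#{#e#}. \<forall>k\<in>#M0. d \<le> k" using M0ge by simp
          qed
          thus ?thesis using Cons f True by simp
        next
          case snz: False
          define K where "K = M0 + replicate_mset s (e - 1)"
          have fs: "fsm M s = K" using Mne enz by (simp add: fsm_def e_def[symmetric] M0_def K_def)
          have fx: "fsm M x = K + replicate_mset (x - s) (e - 1)"
            using Mne enz sx by (intro multiset_eqI) (simp add: fsm_def e_def[symmetric] M0_def K_def)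
          have Kless: "K < M"
          proof (rule less_by_top[of _ e])
            show "count K e < count M e" using enz by (simp add: K_def MM0)
            fix z assume "count K z \<noteq> count M z"
            thus "z \<le> e" using enz by (cases "z = e"; cases "z = e - 1"; simp add: K_def MM0)
          qed
          have Kge: "\<forall>d\<in>#replicate_mset (x - s) (e - 1). \<forall>k\<in>#K. d \<le> k"
            using M0ge snz by (auto simp: K_def)
          have "LM K xs'"
          proof (rule TD[where K=K and xs=xs' and D="replicate_mset (x - s) (e - 1)"])
            show "\<And>s xs. LM K xs \<Longrightarrow> sorted_wrt (<) xs \<Longrightarrow> (\<forall>x\<in>set xs. s<x) \<Longrightarrow> LM (fsm K s) xs"
              using less.IH[OF Kless] by blast
            show "LM (K + replicate_mset (x - s) (e - 1)) xs'" using L1 fx by simp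
            show "sorted_wrt (<) xs'" by (rule srt)
            show "\<forall>d\<in>#replicate_mset (x - s) (e - 1). \<forall>k\<in>#K. d \<le> k" by (rule Kge)
          qed
          hence "LM (fsm K x) xs'" using less.IH[OF Kless] srt gx by blast
          thus ?thesis using Cons fs by simp
        qed
      qed
    qed
  qed
qed

lemma bachmann:
  fixes d g :: "nat multiset"
  assumes lt: "d < g" and nrm: "\<And>e. count d e < y"
  shows "d \<le> fsm g y"
proof -
  have gne: "g \<noteq> {#}" using lt by auto
  define m where "m = mmin g"
  define p where "p = fsm g y"
  have cp: "count p z = count g z - (if z = m then 1 else 0) + (if 0 < m \<and> z = m - 1 then y else 0)" for z
    using count_fsm[OF gne] by (simp add: p_def m_def)
  have below: "count g z = 0" if "z < m" for z
    using mmin_le[of z g] that m_def by (metis count_inI leD)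
  have cm: "count g m > 0" using mmin_in[OF gne] m_def by simp
  define DD where "DD = {w. count d w \<noteq> count g w}"
  have finD: "finite DD" unfolding DD_def
    by (rule finite_subset[of _ "set_mset d \<union> set_mset g"]) (auto, metis count_inI)
  have neD: "DD \<noteq> {}"
  proof
    assume "DD = {}"
    hence "d = g" unfolding DD_def by (auto intro: multiset_eqI)
    thus False using lt by simp
  qed
  define w0 where "w0 = Max DD"
  have w0D: "w0 \<in> DD" using finD neD w0_def by simp
  have above: "count d z = count g z" if "z > w0" for z
  proof (rule ccontr)
    assume "count d z \<noteq> count g z"
    hence "z \<in> DD" unfolding DD_def by simp
    hence "z \<le> w0" using Max_ge[OF finD] w0_def by simp
    thus False using that by simp
  qed
  have at: "count d w0 < count g w0"
  proof -
    have "\<not> count g w0 < count d w0"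
    proof
      assume "count g w0 < count d w0"
      then obtain x where "x > w0" "count d x < count g x" using lt unfolding less_multiset\<^sub>H\<^sub>O by blast
      thus False using above by force
    qed
    thus ?thesis using w0D DD_def by simp
  qed
  have w0m: "m \<le> w0" using at below by (metis leI less_nat_zero_code)
  show ?thesis
  proof (cases "d = p")
    case True thus ?thesis by (simp add: p_def)
  next
    case dne: False
    have "d < p" unfolding less_multiset\<^sub>H\<^sub>O
    proof (intro conjI allI impI)
      show "d \<noteq> p" by (rule dne)
      fix z assume H: "count p z < count d z"
      show "\<exists>x>z. count d x < count p x"
      proof (cases "m < w0")
        case True
        have "z < w0"
        proof (rule ccontr)
          assume "\<not> z < w0"
          hence "z = w0 \<or> z > w0" by auto
          thus False
          proof
            assume "z = w0" thus False using H at True cp[of w0] by (auto split: if_splits)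
          next
            assume "z > w0" thus False using H above[of z] True cp[of z] by (auto split: if_splits)
          qed
        qed
        moreover have "count d w0 < count p w0" using at True cp[of w0] by (auto split: if_splits)
        ultimately show ?thesis by blast
      next
        case False
        hence wm: "w0 = m" using w0m by simp
        have zm: "z < m"
        proof (rule ccontr)
          assume "\<not> z < m"
          hence "z = m \<or> z > m" by auto
          thus False
          proof
            assume "z = m" thus False using H at wm cp[of m] cm by (auto split: if_splits)
          next
            assume "z > m" thus False using H above[of z] wm cp[of z] by (auto split: if_splits)
          qed
        qed
        show ?thesis
        proof (cases "count d m < count p m")
          case True thus ?thesis using zm by blast
        next
          case False
          have m0: "0 < m" using zm by simp
          have "count p (m - 1) = y" using cp[of "m - 1"] below[of "m - 1"] m0 by simp
          hence z1: "z \<noteq> m - 1" using H nrm[of "m - 1"] by auto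
          hence "z < m - 1" using zm by simp
          moreover have "count d (m - 1) < count p (m - 1)"
            using \<open>count p (m - 1) = y\<close> nrm by simp
          ultimately show ?thesis by blast
        qed
      qed
    qed
    thus ?thesis by (simp add: p_def)
  qed
qed

lemma Mono:
  "LM g xs \<Longrightarrow> d \<le> g \<Longrightarrow> sorted_wrt (<) xs \<Longrightarrow> (\<forall>x\<in>set xs. \<forall>e. count d e < x) \<Longrightarrow> LM d xs"
proof (induction xs arbitrary: g)
  case Nil thus ?case by (cases "d = {#}") auto
next
  case (Cons y ys)
  show ?case
  proof (cases "d = g")
    case True thus ?thesis using Cons by simp
  next
    case False
    hence "d < g" using Cons.prems(2) by simp
    hence "d \<le> fsm g y" using bachmann Cons.prems(4) by simp
    hence "LM d ys" using Cons.IH[of "fsm g y"] Cons.prems by simp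
    hence "LM (fsm d y) ys" using Claim[of d ys y] Cons.prems(3) by simp
    thus ?thesis by simp
  qed
qed

lemma ns_order:
  fixes S A :: "nat multiset"
  assumes Ane: "A \<noteq> {#}"
  shows "S + fsm A y \<le> fsm (S + A) y"
proof -
  have SAne: "S + A \<noteq> {#}" using Ane by simp
  define m where "m = mmin (S + A)"
  define e where "e = mmin A"
  have eA: "count A e > 0" using mmin_in[OF Ane] e_def by simp
  have me: "m \<le> e" using mmin_le[of e "S + A"] mmin_in[OF Ane] m_def e_def by simp
  have mG: "count (S + A) m > 0" using mmin_in[OF SAne] m_def by simp
  have c1: "count (S + fsm A y) z = count S z + count A z - (if z = e then 1 else 0) + (if 0 < e \<and> z = e - 1 then y else 0)" for z
    using count_fsm[OF Ane, of y z] mmin_in[OF Ane] by (auto simp: e_def)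
  have c2: "count (fsm (S + A) y) z = count S z + count A z - (if z = m then 1 else 0) + (if 0 < m \<and> z = m - 1 then y else 0)" for z
    using count_fsm[OF SAne, of y z] m_def by simp
  show ?thesis
  proof (cases "m = e")
    case True
    have "S + fsm A y = fsm (S + A) y"
      by (rule multiset_eqI) (simp only: c1 c2 True)
    thus ?thesis by simp
  next
    case False
    hence me': "m < e" using me by simp
    have "S + fsm A y < fsm (S + A) y"
    proof (rule less_by_top[of _ e])
      show "count (S + fsm A y) e < count (fsm (S + A) y) e"
        using c1[of e] c2[of e] me' eA by auto
      fix z assume "count (S + fsm A y) z \<noteq> count (fsm (S + A) y) z"
      thus "z \<le> e" using c1[of z] c2[of z] me' by (cases "z \<le> e") (auto split: if_splits)
    qed
    thus ?thesis by simp
  qed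
qed

lemma count_fsm_le:
  assumes "\<And>e. count M e \<le> y" shows "count (fsm M y) e \<le> y"
proof (cases "M = {#}")
  case True thus ?thesis by simp
next
  case False
  have "count M (mmin M - 1) = 0" if "0 < mmin M"
    using mmin_le[of "mmin M - 1" M] that by (metis count_inI diff_less leD zero_less_one)
  thus ?thesis using assms[of e] count_fsm[OF False, of y e] by (auto split: if_splits)
qed

lemma NS:
  fixes g :: "nat \<Rightarrow> 'c" and I :: "'c set"
  assumes finI: "finite I" and neI: "I \<noteq> {}"
  shows "sorted_wrt (<) xs \<Longrightarrow> (\<forall>x\<in>set xs. g x \<in> I)
    \<Longrightarrow> (\<forall>x\<in>set xs. \<forall>z\<in>set xs. x < z \<longrightarrow> card I * x < z)
    \<Longrightarrow> (\<forall>i\<in>I. \<forall>e. \<forall>x\<in>set xs. count (al i) e \<le> x)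
    \<Longrightarrow> LM (\<Sum>i\<in>I. al i) xs
    \<Longrightarrow> \<exists>i\<in>I. LM (al i) (filter (\<lambda>x. g x = i) xs)"
proof (induction xs arbitrary: al)
  case Nil
  then have "sum al I = {#}" by simp
  then have "\<forall>i\<in>I. al i = {#}" using sum_eq_empty_iff[OF finI] by blast
  thus ?case using neI by auto
next
  case (Cons y ys)
  show ?case
  proof (cases "\<exists>i\<in>I. al i = {#}")
    case True
    then obtain i where "i \<in> I" "al i = {#}" by blast
    thus ?thesis by (intro bexI[of _ i]) auto
  next
    case False
    define j where "j = g y"
    have jI: "j \<in> I" using Cons.prems(2) j_def by simp
    define al' where "al' = al(j := fsm (al j) y)"
    define S where "S = (\<Sum>i\<in>I - {j}. al i)"
    have G: "(\<Sum>i\<in>I. al i) = S + al j"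
      using sum.remove[OF finI jI, of al] S_def by (simp add: add.commute)
    have S': "(\<Sum>i\<in>I - {j}. al' i) = S" unfolding S_def al'_def by (rule sum.cong) auto
    have G': "(\<Sum>i\<in>I. al' i) = S + fsm (al j) y"
      using sum.remove[OF finI jI, of al'] S' by (simp add: add.commute al'_def)
    have ord: "(\<Sum>i\<in>I. al' i) \<le> fsm (\<Sum>i\<in>I. al i) y"
      unfolding G G' using False jI by (intro ns_order) auto
    have cnt: "count (al' i) e \<le> y" if "i \<in> I" for i e
    proof (cases "i = j")
      case True
      have "\<And>e. count (al j) e \<le> y" using Cons.prems(4) jI by simp
      thus ?thesis using True count_fsm_le al'_def by simp
    next
      case False thus ?thesis using Cons.prems(4) that al'_def by simp
    qed
    have nrm: "\<forall>x\<in>set ys. \<forall>e. count (\<Sum>i\<in>I. al' i) e < x"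
    proof (intro ballI allI)
      fix x e assume x: "x \<in> set ys"
      have "count (\<Sum>i\<in>I. al' i) e = (\<Sum>i\<in>I. count (al' i) e)" by (rule count_sum)
      also have "\<dots> \<le> (\<Sum>i\<in>I. y)" by (rule sum_mono) (rule cnt)
      also have "\<dots> = card I * y" by simp
      also have "\<dots> < x" using Cons.prems(1,3) x by simp
      finally show "count (\<Sum>i\<in>I. al' i) e < x" .
    qed
    have "LM (fsm (\<Sum>i\<in>I. al i) y) ys" using Cons.prems(5) by simp
    hence "LM (\<Sum>i\<in>I. al' i) ys" using Mono ord Cons.prems(1) nrm by auto
    moreover have "\<forall>i\<in>I. \<forall>e. \<forall>x\<in>set ys. count (al' i) e \<le> x"
      using cnt Cons.prems(1) by (meson dual_order.trans less_imp_le_nat set_subset_Cons sorted_wrt.simps(2))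
    ultimately obtain i where iI: "i \<in> I" and Li: "LM (al' i) (filter (\<lambda>x. g x = i) ys)"
      using Cons.IH[of al'] Cons.prems by auto
    show ?thesis
    proof (cases "i = j")
      case True thus ?thesis using iI Li al'_def j_def by (intro bexI[of _ i]) auto
    next
      case False thus ?thesis using iI Li al'_def j_def by (intro bexI[of _ i]) auto
    qed
  qed
qed

lemma fs_mset:
  assumes "sorted (rev a)"
  shows "mset (fs a y) = fsm (mset a) y \<and> sorted (rev (fs a y))"
proof (cases a rule: rev_exhaust)
  case Nil thus ?thesis by (simp add: fs_def)
next
  case (snoc a' l)
  have lle: "\<forall>z\<in>set a'. l \<le> z" using assms snoc by simp
  have sa': "sorted (rev a')" using assms snoc by simp
  have mm: "mmin (mset a) = l" unfolding mmin_def snoc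
    by (rule Min_eqI) (use lle in auto)
  show ?thesis
  proof (cases "l = 0")
    case True thus ?thesis using snoc mm sa' by (simp add: fs_def fsm_def)
  next
    case False
    have "sorted (rev (a' @ replicate y (l - 1)))"
      using sa' lle by (auto simp: sorted_append)
    thus ?thesis using snoc mm False by (simp add: fs_def fsm_def)
  qed
qed

lemma fold_mset:
  "sorted (rev a) \<Longrightarrow> mset (foldl fs a ys) = foldl fsm (mset a) ys"
  by (induction ys arbitrary: a) (simp_all add: fs_mset)

lemma large_LM:
  assumes "sorted (rev a)" "finite X"
  shows "large a X \<longleftrightarrow> LM (mset a) (sorted_list_of_set X)"
  using fold_mset[OF assms(1), of "sorted_list_of_set X"] assms(2)
  unfolding large_def LM_def by (metis mset_zero_iff)

lemma sq_lt_4pow: "(x::nat) * x < 4 ^ x"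
proof -
  have "x < 2 ^ x" by simp
  hence "x * x < 2 ^ x * 2 ^ x" by (simp add: mult_strict_mono)
  also have "\<dots> = 4 ^ x" by (simp add: power_mult_distrib[symmetric])
  finally show ?thesis .
qed

lemma main_aux:
  fixes X :: "nat set" and g :: "nat \<Rightarrow> 'c" and I :: "'c set"
  assumes finX: "finite X" and lg: "large (omega_pow (Suc n)) X" and sp: "exp_sparse X"
    and c4: "4 ^ c \<le> Min X" and finI: "finite I" and neI: "I \<noteq> {}" and cI: "card I \<le> 2 ^ c"
    and gI: "\<forall>x\<in>X. g x \<in> I"
  shows "\<exists>Y \<subseteq> X. large (omega_pow n) Y \<and> (\<forall>y\<in>Y. \<forall>y'\<in>Y. g y = g y')"
proof -
  have Xne: "X \<noteq> {}" using lg by (auto simp: large_def omega_pow_def)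
  define x0 where "x0 = Min X"
  define ys where "ys = sorted_list_of_set (X - {x0})"
  have xs: "sorted_list_of_set X = x0 # ys"
    using sorted_list_of_set_nonempty[OF finX Xne] x0_def ys_def by simp
  have srt: "sorted_wrt (<) (x0 # ys)" by (metis xs sorted_list_of_set.strict_sorted_key_list_of_set map_ident subset_UNIV)
  hence srt': "sorted_wrt (<) ys" and gx0: "\<forall>x\<in>set ys. x0 < x" by auto
  have setys: "set ys = X - {x0}" using ys_def finX by simp
  have "LM {#Suc n#} (x0 # ys)" using lg large_LM[of "[Suc n]" X] finX xs by (simp add: omega_pow_def)
  hence L0: "LM (replicate_mset x0 n) ys" by (simp add: fsm_def mmin_def)
  have cIx0: "card I \<le> x0"
  proof -
    have "(2::nat) ^ c \<le> 4 ^ c" by (simp add: power_mono)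
    thus ?thesis using cI c4 x0_def by linarith
  qed
  have sumI: "(\<Sum>i\<in>I. {#n#}) = replicate_mset (card I) n"
    using finI by (induction I rule: finite_induct) auto
  have le: "replicate_mset (card I) n \<le> replicate_mset x0 n"
    apply (rule subset_eq_imp_le_multiset)
    using cIx0 by (simp add: subseteq_mset_def)
  have L1: "LM (\<Sum>i\<in>I. {#n#}) ys"
    unfolding sumI
    apply (rule Mono[OF L0 le srt'])
    using cIx0 gx0 by (auto simp: count_replicate_mset)
  have "\<exists>i\<in>I. LM ((\<lambda>i. {#n#}) i) (filter (\<lambda>x. g x = i) ys)"
  proof (rule NS[OF finI neI srt'])
    show "\<forall>x\<in>set ys. g x \<in> I" using gI setys by auto
    show "\<forall>x\<in>set ys. \<forall>z\<in>set ys. x < z \<longrightarrow> card I * x < z"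
    proof (intro ballI impI)
      fix x z assume x: "x \<in> set ys" and z: "z \<in> set ys" and xz: "x < z"
      have "card I \<le> x" using cIx0 gx0 x by force
      hence "card I * x \<le> x * x" by simp
      also have "\<dots> < 4 ^ x" by (rule sq_lt_4pow)
      also have "\<dots> < z" using sp x z xz setys unfolding exp_sparse_def by auto
      finally show "card I * x < z" .
    qed
    show "\<forall>i\<in>I. \<forall>e. \<forall>x\<in>set ys. count {#n#} e \<le> x" using gx0 by auto
    show "LM (\<Sum>i\<in>I. {#n#}) ys" by (rule L1)
  qed
  then obtain i where iI: "i \<in> I" and Li: "LM {#n#} (filter (\<lambda>x. g x = i) ys)" by auto
  define Y where "Y = set (filter (\<lambda>x. g x = i) ys)"
  have YX: "Y \<subseteq> X" using Y_def setys by auto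
  have sY: "sorted_list_of_set Y = filter (\<lambda>x. g x = i) ys"
    unfolding Y_def
    by (rule strict_sorted_equal) (use srt' sorted_wrt_filter in auto)
  have "large (omega_pow n) Y"
    using large_LM[of "[n]" Y] Li sY Y_def by (simp add: omega_pow_def)
  moreover have "\<forall>y\<in>Y. \<forall>y'\<in>Y. g y = g y'" using Y_def by auto
  ultimately show ?thesis using YX by blast
qed

theorem lemma2p5:
  fixes X :: "nat set" and n c :: nat
  assumes "finite X" and "large (omega_pow (Suc n)) X" and "exp_sparse X"
    and "4 ^ c \<le> Min X"
  shows "(\<forall>(W::nat set) (P::nat \<Rightarrow> nat \<Rightarrow> bool).
            finite W \<and> card W \<le> c \<and> (\<forall>w\<in>W. w < Min X) \<longrightarrow>
            (\<exists>Y \<subseteq> X. large (omega_pow n) Y \<and>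
               (\<forall>w\<in>W. \<forall>y\<in>Y. \<forall>y'\<in>Y. P w y = P w y')))
       \<and> (\<forall>(W::nat set) (P::nat \<Rightarrow> nat \<Rightarrow> bool).
            finite W \<and> card W \<le> c \<and> (\<forall>w\<in>W. Max X < w) \<longrightarrow>
            (\<exists>Y \<subseteq> X. large (omega_pow n) Y \<and>
               (\<forall>w\<in>W. \<forall>y\<in>Y. \<forall>y'\<in>Y. P y w = P y' w)))"
proof (intro conjI allI impI)
  fix W :: "nat set" and P :: "nat \<Rightarrow> nat \<Rightarrow> bool"
  assume H: "finite W \<and> card W \<le> c \<and> (\<forall>w\<in>W. w < Min X)"
  have cI: "card (Pow W) \<le> 2 ^ c" using H by (simp add: card_Pow)
  obtain Y where Y: "Y \<subseteq> X" "large (omega_pow n) Y"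
      "\<forall>y\<in>Y. \<forall>y'\<in>Y. {w\<in>W. P w y} = {w\<in>W. P w y'}"
    using main_aux[OF assms, of "Pow W" "\<lambda>y. {w\<in>W. P w y}"] H cI Pow_not_empty by blast
  show "\<exists>Y \<subseteq> X. large (omega_pow n) Y \<and> (\<forall>w\<in>W. \<forall>y\<in>Y. \<forall>y'\<in>Y. P w y = P w y')"
  proof (intro exI conjI ballI)
    fix w y y' assume "w \<in> W" "y \<in> Y" "y' \<in> Y"
    thus "P w y = P w y'" using Y(3) by blast
  qed (use Y in auto)
next
  fix W :: "nat set" and P :: "nat \<Rightarrow> nat \<Rightarrow> bool"
  assume H: "finite W \<and> card W \<le> c \<and> (\<forall>w\<in>W. Max X < w)"
  have cI: "card (Pow W) \<le> 2 ^ c" using H by (simp add: card_Pow)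
  obtain Y where Y: "Y \<subseteq> X" "large (omega_pow n) Y"
      "\<forall>y\<in>Y. \<forall>y'\<in>Y. {w\<in>W. P y w} = {w\<in>W. P y' w}"
    using main_aux[OF assms, of "Pow W" "\<lambda>y. {w\<in>W. P y w}"] H cI Pow_not_empty by blast
  show "\<exists>Y \<subseteq> X. large (omega_pow n) Y \<and> (\<forall>w\<in>W. \<forall>y\<in>Y. \<forall>y'\<in>Y. P y w = P y' w)"
  proof (intro exI conjI ballI)
    fix w y y' assume "w \<in> W" "y \<in> Y" "y' \<in> Y"
    thus "P y w = P y' w" using Y(3) by blast
  qed (use Y in auto)
qed

end
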